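(* Let $(\mathcal T_r)_{r\in\mathbb Z}$ be any generalized Tribonacci sequence. Then for every integer $r$ and every non-negative integer $k$: \[ 103\sum_{j=0}^k56^j\mathcal T_{r+16+17j}=56^{k+1}\mathcal T_{r+17k+17}-\mathcal T_r, \] \[ 56\sum_{j=0}^k(-1)^j103^j\mathcal T_{r+17+16j}=\mathcal T_r-(-103)^{k+1}\mathcal T_{r+16k+16}, \] \[ \sum_{j=0}^k103^{k-j}56^j\mathcal T_{r-16+j}=-103^{k+1}\mathcal T_r+56^{k+1}\mathcal T_{r+k+1}. \]
   Context: A generalized Tribonacci sequence is a two-sided sequence $(\mathcal T_r)_{r\in\mathbb Z}$ of complex numbers with $\mathcal T_r=\mathcal T_{r-1}+\mathcal T_{r-2}+\mathcal T_{r-3}$ for all $r\in\mathbb Z$. *)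

theory Defs
  imports Complex_Main
begin

definition gen_tribonacci :: "(int \<Rightarrow> complex) \<Rightarrow> bool" where
  "gen_tribonacci T \<longleftrightarrow> (\<forall>r::int. T r = T (r - 1) + T (r - 2) + T (r - 3))"

end

theory Submission
  imports Defs
begin

lemma key:
  assumes "gen_tribonacci T"
  shows "T n + 103 * T (n+16) = 56 * T (n+17)"
proof -
  have h: "\<And>r. T r = T (r - 1) + T (r - 2) + T (r - 3)"
    using assms unfolding gen_tribonacci_def by blast
  have e3: "T (n+3) = 1*T (n+2) + 1*T (n+1) + 1*T n"
    using h[of "n+3"]  by (simp add: algebra_simps)
  have e4: "T (n+4) = 2*T (n+2) + 2*T (n+1) + 1*T n"
    using h[of "n+4"] e3 by (simp add: algebra_simps)
  have e5: "T (n+5) = 4*T (n+2) + 3*T (n+1) + 2*T n"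
    using h[of "n+5"] e4 e3 by (simp add: algebra_simps)
  have e6: "T (n+6) = 7*T (n+2) + 6*T (n+1) + 4*T n"
    using h[of "n+6"] e5 e4 e3 by (simp add: algebra_simps)
  have e7: "T (n+7) = 13*T (n+2) + 11*T (n+1) + 7*T n"
    using h[of "n+7"] e6 e5 e4 by (simp add: algebra_simps)
  have e8: "T (n+8) = 24*T (n+2) + 20*T (n+1) + 13*T n"
    using h[of "n+8"] e7 e6 e5 by (simp add: algebra_simps)
  have e9: "T (n+9) = 44*T (n+2) + 37*T (n+1) + 24*T n"
    using h[of "n+9"] e8 e7 e6 by (simp add: algebra_simps)
  have e10: "T (n+10) = 81*T (n+2) + 68*T (n+1) + 44*T n"
    using h[of "n+10"] e9 e8 e7 by (simp add: algebra_simps)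
  have e11: "T (n+11) = 149*T (n+2) + 125*T (n+1) + 81*T n"
    using h[of "n+11"] e10 e9 e8 by (simp add: algebra_simps)
  have e12: "T (n+12) = 274*T (n+2) + 230*T (n+1) + 149*T n"
    using h[of "n+12"] e11 e10 e9 by (simp add: algebra_simps)
  have e13: "T (n+13) = 504*T (n+2) + 423*T (n+1) + 274*T n"
    using h[of "n+13"] e12 e11 e10 by (simp add: algebra_simps)
  have e14: "T (n+14) = 927*T (n+2) + 778*T (n+1) + 504*T n"
    using h[of "n+14"] e13 e12 e11 by (simp add: algebra_simps)
  have e15: "T (n+15) = 1705*T (n+2) + 1431*T (n+1) + 927*T n"
    using h[of "n+15"] e14 e13 e12 by (simp add: algebra_simps)
  have e16: "T (n+16) = 3136*T (n+2) + 2632*T (n+1) + 1705*T n"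
    using h[of "n+16"] e15 e14 e13 by (simp add: algebra_simps)
  have e17: "T (n+17) = 5768*T (n+2) + 4841*T (n+1) + 3136*T n"
    using h[of "n+17"] e16 e15 e14 by (simp add: algebra_simps)
  show ?thesis using e16 e17 by (simp add: algebra_simps)
qed

lemma p1:
  assumes "gen_tribonacci T"
  shows "103 * (\<Sum>j=0..k. 56 ^ j * T (r + 16 + 17 * int j))
           = 56 ^ (k + 1) * T (r + 17 * int k + 17) - T r"
proof (induction k)
  case 0 then show ?case using key[OF assms, of r] by (simp add: algebra_simps)
next
  case (Suc k)
  have K: "T (r + 17 * int k + 17) + 103 * T (r + 17 * int k + 17 + 16) = 56 * T (r + 17 * int k + 17 + 17)"
    by (rule key[OF assms])
  have a: "r + 17 * int k + 17 + 16 = r + 16 + 17 * int (Suc k)" "r + 17 * int k + 17 + 17 = r + 17 * int (Suc k) + 17" by simp_all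
  have K': "56^(k+1) * T (r + 17 * int k + 17) + 103 * 56^(k+1) * T (r + 16 + 17 * int (Suc k)) = 56^(k+2) * T (r + 17 * int (Suc k) + 17)"
    using arg_cong[OF K[unfolded a], of "\<lambda>x. 56^(k+1) * x"] by (simp add: algebra_simps)
  have "103 * (\<Sum>j=0..Suc k. 56 ^ j * T (r + 16 + 17 * int j)) = 103 * (\<Sum>j=0..k. 56 ^ j * T (r + 16 + 17 * int j)) + 103 * 56^(k+1) * T (r + 16 + 17 * int (Suc k))"
    by (simp add: algebra_simps)
  also have "\<dots> = 56 ^ (Suc k + 1) * T (r + 17 * int (Suc k) + 17) - T r"
    using Suc K' by simp
  finally show ?case .
qed

lemma p2:
  assumes "gen_tribonacci T"
  shows "56 * (\<Sum>j=0..k. (-1) ^ j * 103 ^ j * T (r + 17 + 16 * int j))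
           = T r - (-103) ^ (k + 1) * T (r + 16 * int k + 16)"
proof (induction k)
  case 0 then show ?case using key[OF assms, of r] by (simp add: algebra_simps)
next
  case (Suc k)
  have K: "T (r + 16 * int k + 16) + 103 * T (r + 16 * int k + 16 + 16) = 56 * T (r + 16 * int k + 16 + 17)"
    by (rule key[OF assms])
  have a: "r + 16 * int k + 16 + 16 = r + 16 * int (Suc k) + 16" "r + 16 * int k + 16 + 17 = r + 17 + 16 * int (Suc k)" by simp_all
  have K': "(-103)^(k+1) * T (r + 16 * int k + 16) + 103 * (-103)^(k+1) * T (r + 16 * int (Suc k) + 16) = 56 * (-103)^(k+1) * T (r + 17 + 16 * int (Suc k))"
    using arg_cong[OF K[unfolded a], of "\<lambda>x. (-103)^(k+1) * x"] by (simp add: algebra_simps)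
  have e: "(-1::complex) ^ Suc k * 103 ^ Suc k = (-103)^(k+1)" by (simp add: power_mult_distrib[symmetric])
  have "56 * (\<Sum>j=0..Suc k. (-1) ^ j * 103 ^ j * T (r + 17 + 16 * int j)) = 56 * (\<Sum>j=0..k. (-1) ^ j * 103 ^ j * T (r + 17 + 16 * int j)) + 56 * ((-1) ^ Suc k * 103 ^ Suc k) * T (r + 17 + 16 * int (Suc k))"
    by (simp only: sum.atLeast0_atMost_Suc distrib_left mult.assoc)
  also have "\<dots> = T r - (-103) ^ (Suc k + 1) * T (r + 16 * int (Suc k) + 16)"
    unfolding e Suc using K' by (simp add: algebra_simps)
  finally show ?case .
qed

lemma p3:
  assumes "gen_tribonacci T"
  shows "(\<Sum>j=0..k. 103 ^ (k - j) * 56 ^ j * T (r - 16 + int j))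
           = - (103 ^ (k + 1)) * T r + 56 ^ (k + 1) * T (r + int k + 1)"
proof (induction k)
  case 0 then show ?case using key[OF assms, of "r-16"] by (simp add: algebra_simps)
next
  case (Suc k)
  have s: "(\<Sum>j=0..Suc k. 103 ^ (Suc k - j) * 56 ^ j * T (r - 16 + int j))
     = 103 * (\<Sum>j=0..k. 103 ^ (k - j) * 56 ^ j * T (r - 16 + int j)) + 56 ^ Suc k * T (r - 16 + int (Suc k))"
  proof -
    have "(\<Sum>j=0..k. 103 ^ (Suc k - j) * 56 ^ j * T (r - 16 + int j)) = (\<Sum>j=0..k. 103 * (103 ^ (k - j) * 56 ^ j * T (r - 16 + int j)))"
      by (rule sum.cong) (auto simp: Suc_diff_le)
    then show ?thesis by (simp add: sum_distrib_left)
  qed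
  have K: "T (r + int k + 1) + 103 * T (r + int k + 1 + 16) = 56 * T (r + int k + 1 + 17)"
    by (rule key[OF assms])
  have a: "r - 16 + int (Suc k) = r + int k + 1 + 16 - 32" by simp
  have K2: "T (r - 16 + int (Suc k)) + 103 * T (r + int k + 1) = 56 * T (r + int (Suc k) + 1)"
  proof -
    have "r - 16 + int (Suc k) + 16 = r + int k + 1" "r - 16 + int (Suc k) + 17 = r + int (Suc k) + 1" by simp_all
    then show ?thesis using key[OF assms, of "r - 16 + int (Suc k)"] by (simp add: ac_simps)
  qed
  have K3: "56^(k+1) * T (r - 16 + int (Suc k)) + 103 * 56^(k+1) * T (r + int k + 1) = 56^(k+2) * T (r + int (Suc k) + 1)"
  proof -
    have "56^(k+1) * (T (r - 16 + int (Suc k)) + 103 * T (r + int k + 1)) = 56^(k+1) * (56 * T (r + int (Suc k) + 1))"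
      by (simp only: K2)
    then show ?thesis by (simp add: algebra_simps)
  qed
  show ?case unfolding s Suc using K3 by (simp add: algebra_simps)
qed

theorem mainTheorem9:
  fixes T :: "int \<Rightarrow> complex" and r :: int and k :: nat
  assumes "gen_tribonacci T"
  shows "(103 * (\<Sum>j=0..k. 56 ^ j * T (r + 16 + 17 * int j))
           = 56 ^ (k + 1) * T (r + 17 * int k + 17) - T r) \<and>
         (56 * (\<Sum>j=0..k. (-1) ^ j * 103 ^ j * T (r + 17 + 16 * int j))
           = T r - (-103) ^ (k + 1) * T (r + 16 * int k + 16)) \<and>
         ((\<Sum>j=0..k. 103 ^ (k - j) * 56 ^ j * T (r - 16 + int j))
           = - (103 ^ (k + 1)) * T r + 56 ^ (k + 1) * T (r + int k + 1))"
  using p1[OF assms] p2[OF assms] p3[OF assms] by blast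

end
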